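(* Let $L=\langle S,A,\to\rangle$ be a labelled transition system and $x,y\in\{o,b\}$. Then $\mathrel{\underline{\leftrightarrow}}_{(x,y)}$ has the stuttering property: whenever $t_0\xrightarrow{\tau}t_1\xrightarrow{\tau}\cdots\xrightarrow{\tau}t_k$ with $t_0\mathrel{\underline{\leftrightarrow}}_{(x,y)}t_k$, then $t_i\mathrel{\underline{\leftrightarrow}}_{(x,y)}t_j$ for all $0\le i,j\le k$.
   Context: An LTS is $\langle S,A,\to\rangle$ with states $S$, actions $A$ containing the internal action $\tau$, and $\to\subseteq S\times A\times S$; write $s\xrightarrow{a}t$, and $\twoheadrightarrow$ for the reflexive-transitive closure of $\xrightarrow{\tau}$. For $R\subseteq S\times S$ and $s,s',t$: $s\twoheadrightarrow_{o,R,t}s'$ iff $s\twoheadrightarrow s'$; $s\twoheadrightarrow_{b,R,t}s'$ iff $s\twoheadrightarrow s'$, $t\,R\,s$ and $t\,R\,s'$. For $x,y\in\{o,b\}$, a symmetric $R$ is an $(x,y)$-generic bisimulation if whenever $s\,R\,t$ and $s\xrightarrow{a}s'$, either $a=\tau$ and $s'\,R\,t$, or there exist $t',t_1,t_2$ with $t\twoheadrightarrow_{x,R,s}t_1\xrightarrow{a}t_2\twoheadrightarrow_{y,R,s'}t'$ and $s'\,R\,t'$. $s\mathrel{\underline{\leftrightarrow}}_{(x,y)}t$ iff some $(x,y)$-generic bisimulation relates $s$ and $t$. *)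

theory Defs
  imports Main
begin

datatype mode = Mo | Mb

definition tau_steps :: "('s \<Rightarrow> 'a \<Rightarrow> 's \<Rightarrow> bool) \<Rightarrow> 'a \<Rightarrow> 's \<Rightarrow> 's \<Rightarrow> bool" where
  "tau_steps tr tau = (\<lambda>s s'. tr s tau s')\<^sup>*\<^sup>*"

definition gstep :: "('s \<Rightarrow> 'a \<Rightarrow> 's \<Rightarrow> bool) \<Rightarrow> 'a \<Rightarrow> mode \<Rightarrow> ('s \<Rightarrow> 's \<Rightarrow> bool)
    \<Rightarrow> 's \<Rightarrow> 's \<Rightarrow> 's \<Rightarrow> bool" where
  "gstep tr tau m R t s s' =
     (case m of Mo \<Rightarrow> tau_steps tr tau s s'
              | Mb \<Rightarrow> tau_steps tr tau s s' \<and> R t s \<and> R t s')"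

definition generic_bisim :: "('s \<Rightarrow> 'a \<Rightarrow> 's \<Rightarrow> bool) \<Rightarrow> 'a \<Rightarrow> mode \<Rightarrow> mode
    \<Rightarrow> ('s \<Rightarrow> 's \<Rightarrow> bool) \<Rightarrow> bool" where
  "generic_bisim tr tau x y R \<longleftrightarrow>
     symp R \<and>
     (\<forall>s t a s'. R s t \<and> tr s a s' \<longrightarrow>
        (a = tau \<and> R s' t) \<or>
        (\<exists>t' t1 t2. gstep tr tau x R s t t1 \<and> tr t1 a t2 \<and> gstep tr tau y R s' t2 t' \<and> R s' t'))"

definition gbisimilar :: "('s \<Rightarrow> 'a \<Rightarrow> 's \<Rightarrow> bool) \<Rightarrow> 'a \<Rightarrow> mode \<Rightarrow> mode \<Rightarrow> 's \<Rightarrow> 's \<Rightarrow> bool" where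
  "gbisimilar tr tau x y s t \<longleftrightarrow> (\<exists>R. generic_bisim tr tau x y R \<and> R s t)"

end

theory Submission
  imports Defs
begin

lemma gstep_mono:
  assumes "\<And>a b. R a b \<Longrightarrow> R' a b" "gstep tr tau m R s t u"
  shows "gstep tr tau m R' s t u"
  using assms by (cases m) (auto simp: gstep_def)

lemma gstep_tau: "gstep tr tau m R s t u \<Longrightarrow> tau_steps tr tau t u"
  by (cases m) (auto simp: gstep_def)

lemma T_refl: "tau_steps tr tau a a" by (simp add: tau_steps_def)
lemma T_trans: "tau_steps tr tau a b \<Longrightarrow> tau_steps tr tau b c \<Longrightarrow> tau_steps tr tau a c"
  unfolding tau_steps_def by (rule rtranclp_trans)
lemma T_step: "tr a tau b \<Longrightarrow> tau_steps tr tau a b"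
  unfolding tau_steps_def by auto

lemma lift_match:
  assumes "\<And>a b. R a b \<Longrightarrow> Q a b"
    and "(a = tau \<and> R s' t) \<or>
        (\<exists>t' t1 t2. gstep tr tau x R s t t1 \<and> tr t1 a t2 \<and> gstep tr tau y R s' t2 t' \<and> R s' t')"
  shows "(a = tau \<and> Q s' t) \<or>
        (\<exists>t' t1 t2. gstep tr tau x Q s t t1 \<and> tr t1 a t2 \<and> gstep tr tau y Q s' t2 t' \<and> Q s' t')"
  using assms(2)
proof
  assume "a = tau \<and> R s' t" then show ?thesis using assms(1) by blast
next
  assume "\<exists>t' t1 t2. gstep tr tau x R s t t1 \<and> tr t1 a t2 \<and> gstep tr tau y R s' t2 t' \<and> R s' t'"
  then obtain t' t1 t2 where g: "gstep tr tau x R s t t1" "tr t1 a t2" "gstep tr tau y R s' t2 t'" "R s' t'"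
    by blast
  have "gstep tr tau x Q s t t1" using g(1) assms(1) by (cases x) (auto simp: gstep_def)
  moreover have "gstep tr tau y Q s' t2 t'" using g(3) assms(1) by (cases y) (auto simp: gstep_def)
  ultimately show ?thesis using g(2,4) assms(1) by blast
qed

definition Pp where
  "Pp tr tau B m n \<longleftrightarrow> (\<exists>r z. tau_steps tr tau r m \<and> tau_steps tr tau m n \<and>
      tau_steps tr tau n z \<and> B r z)"

definition Qq where
  "Qq tr tau B a b \<longleftrightarrow> B a b \<or> Pp tr tau B a b \<or> Pp tr tau B b a"

lemma refl_bisim:
  assumes "generic_bisim tr tau x y R"
  shows "generic_bisim tr tau x y (\<lambda>a b. R a b \<or> a = b)"
  unfolding generic_bisim_def
proof (intro conjI allI impI)
  show "symp (\<lambda>a b. R a b \<or> a = b)" using assms unfolding generic_bisim_def symp_def by blast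
next
  fix s t a s'
  assume h: "(R s t \<or> s = t) \<and> tr s a s'"
  let ?B = "\<lambda>a b. R a b \<or> a = b"
  show "(a = tau \<and> ?B s' t) \<or>
        (\<exists>t' t1 t2. gstep tr tau x ?B s t t1 \<and> tr t1 a t2 \<and> gstep tr tau y ?B s' t2 t' \<and> ?B s' t')"
  proof (cases "R s t")
    case True
    with h assms have "(a = tau \<and> R s' t) \<or>
        (\<exists>t' t1 t2. gstep tr tau x R s t t1 \<and> tr t1 a t2 \<and> gstep tr tau y R s' t2 t' \<and> R s' t')"
      unfolding generic_bisim_def by blast
    then show ?thesis by (rule lift_match[rotated]) auto
  next
    case False
    then have "s = t" using h by auto
    have "gstep tr tau x ?B s t s" using \<open>s = t\<close> by (cases x) (auto simp: gstep_def T_refl)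
    moreover have "gstep tr tau y ?B s' s' s'" by (cases y) (auto simp: gstep_def T_refl)
    ultimately show ?thesis using h by blast
  qed
qed

lemma key:
  assumes bis: "generic_bisim tr tau x y B"
    and Tr: "(\<lambda>s s'. tr s tau s')\<^sup>*\<^sup>* r m"
    and st: "tr m a m'"
  shows "\<forall>z. B r z \<longrightarrow> tau_steps tr tau m z \<longrightarrow>
     (a = tau \<and> Qq tr tau B m' z) \<or>
     (\<exists>t' t1 t2. gstep tr tau x (Qq tr tau B) m z t1 \<and> tr t1 a t2 \<and>
        gstep tr tau y (Qq tr tau B) m' t2 t' \<and> Qq tr tau B m' t')"
  using Tr
proof (induction rule: converse_rtranclp_induct)
  case base
  show ?case
  proof (intro allI impI)
    fix z assume "B m z" "tau_steps tr tau m z"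
    with bis st have "(a = tau \<and> B m' z) \<or>
        (\<exists>t' t1 t2. gstep tr tau x B m z t1 \<and> tr t1 a t2 \<and> gstep tr tau y B m' t2 t' \<and> B m' t')"
      unfolding generic_bisim_def by blast
    moreover have sub: "\<And>a b. B a b \<Longrightarrow> Qq tr tau B a b" unfolding Qq_def by auto
    ultimately show "(a = tau \<and> Qq tr tau B m' z) \<or>
     (\<exists>t' t1 t2. gstep tr tau x (Qq tr tau B) m z t1 \<and> tr t1 a t2 \<and>
        gstep tr tau y (Qq tr tau B) m' t2 t' \<and> Qq tr tau B m' t')"
      by (rule lift_match[rotated])
  qed
next
  case (step r r1)
  have Trm: "tau_steps tr tau r m" unfolding tau_steps_def
    by (rule converse_rtranclp_into_rtranclp[OF step(1) step(2)])
  show ?case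
  proof (intro allI impI)
    fix z assume Brz: "B r z" and Tmz: "tau_steps tr tau m z"
    from bis Brz step(1) have "(B r1 z) \<or>
        (\<exists>t' t1 t2. gstep tr tau x B r z t1 \<and> tr t1 tau t2 \<and> gstep tr tau y B r1 t2 t' \<and> B r1 t')"
      unfolding generic_bisim_def by blast
    then show "(a = tau \<and> Qq tr tau B m' z) \<or>
     (\<exists>t' t1 t2. gstep tr tau x (Qq tr tau B) m z t1 \<and> tr t1 a t2 \<and>
        gstep tr tau y (Qq tr tau B) m' t2 t' \<and> Qq tr tau B m' t')"
    proof
      assume "B r1 z" then show ?thesis using step(3) Tmz by blast
    next
      assume "\<exists>t' t1 t2. gstep tr tau x B r z t1 \<and> tr t1 tau t2 \<and> gstep tr tau y B r1 t2 t' \<and> B r1 t'"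
      then obtain v' v1 v2 where v: "gstep tr tau x B r z v1" "tr v1 tau v2"
        "gstep tr tau y B r1 v2 v'" "B r1 v'" by blast
      obtain z' where z': "B r1 z'" "tau_steps tr tau v2 z'"
        "\<And>Q. Q m' z' \<Longrightarrow> gstep tr tau y Q m' v2 z'"
      proof (cases y)
        case Mo
        show ?thesis
        proof (rule that[of v'])
          show "B r1 v'" by (rule v(4))
          show "tau_steps tr tau v2 v'" using gstep_tau[OF v(3)] .
          show "gstep tr tau y Q m' v2 v'" if "Q m' v'" for Q
            using Mo gstep_tau[OF v(3)] by (simp add: gstep_def)
        qed
      next
        case Mb
        show ?thesis
        proof (rule that[of v2])
          show "B r1 v2" using Mb v(3) by (simp add: gstep_def)
          show "tau_steps tr tau v2 v2" by (rule T_refl)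
          show "gstep tr tau y Q m' v2 v2" if "Q m' v2" for Q
            using Mb that by (simp add: gstep_def T_refl)
        qed
      qed
      have Tzv1: "tau_steps tr tau z v1" using gstep_tau[OF v(1)] .
      have Tzz': "tau_steps tr tau z z'"
        using T_trans[OF Tzv1 T_trans[OF T_step[of tr v1 tau v2, OF v(2)] z'(2)]] .
      have Tmz': "tau_steps tr tau m z'" using T_trans[OF Tmz Tzz'] .
      have "Pp tr tau B m z" unfolding Pp_def using Trm Tmz Brz T_refl[of tr tau z] by blast
      then have Qmz: "Qq tr tau B m z" unfolding Qq_def by blast
      have IH: "(a = tau \<and> Qq tr tau B m' z') \<or>
         (\<exists>t' t1 t2. gstep tr tau x (Qq tr tau B) m z' t1 \<and> tr t1 a t2 \<and>
          gstep tr tau y (Qq tr tau B) m' t2 t' \<and> Qq tr tau B m' t')"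
        using step(3) z'(1) Tmz' by blast
      then show ?thesis
      proof
        assume h: "a = tau \<and> Qq tr tau B m' z'"
        have "gstep tr tau x (Qq tr tau B) m z v1"
        proof (cases x)
          case Mo then show ?thesis using Tzv1 by (simp add: gstep_def)
        next
          case Mb
          then have "B r v1" using v(1) by (simp add: gstep_def)
          then have "Pp tr tau B m v1" unfolding Pp_def
            using Trm T_trans[OF Tmz Tzv1] T_refl[of tr tau v1] by blast
          then have "Qq tr tau B m v1" unfolding Qq_def by blast
          then show ?thesis using Mb Tzv1 Qmz by (simp add: gstep_def)
        qed
        moreover have "gstep tr tau y (Qq tr tau B) m' v2 z'" using z'(3) h by blast
        ultimately show ?thesis using h v(2) by blast
      next
        assume "\<exists>t' t1 t2. gstep tr tau x (Qq tr tau B) m z' t1 \<and> tr t1 a t2 \<and>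
          gstep tr tau y (Qq tr tau B) m' t2 t' \<and> Qq tr tau B m' t'"
        then obtain w' w1 w2 where w: "gstep tr tau x (Qq tr tau B) m z' w1" "tr w1 a w2"
          "gstep tr tau y (Qq tr tau B) m' w2 w'" "Qq tr tau B m' w'" by blast
        have "gstep tr tau x (Qq tr tau B) m z w1"
        proof -
          have "tau_steps tr tau z w1" using T_trans[OF Tzz' gstep_tau[OF w(1)]] .
          then show ?thesis using w(1) Qmz by (cases x) (auto simp: gstep_def)
        qed
        then show ?thesis using w by blast
      qed
    qed
  qed
qed

lemma path:
  assumes "\<forall>i<k. tr (t i) tau (t (Suc i))"
  shows "i \<le> j \<Longrightarrow> j \<le> k \<Longrightarrow> tau_steps tr tau (t i) (t j)"
proof (induction j)
  case 0 then show ?case by (simp add: T_refl)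
next
  case (Suc j)
  show ?case
  proof (cases "i = Suc j")
    case True then show ?thesis by (simp add: T_refl)
  next
    case False
    then have "tau_steps tr tau (t i) (t j)" using Suc by auto
    moreover have "tr (t j) tau (t (Suc j))" using assms Suc.prems by auto
    ultimately show ?thesis using T_trans[OF _ T_step[of tr "t j" tau "t (Suc j)"]] by blast
  qed
qed

theorem lemma4p8:
  fixes tr :: "'s \<Rightarrow> 'a \<Rightarrow> 's \<Rightarrow> bool" and tau :: 'a and x y :: mode
    and t :: "nat \<Rightarrow> 's" and k :: nat
  assumes "\<forall>i<k. tr (t i) tau (t (Suc i))"
    and "gbisimilar tr tau x y (t 0) (t k)"
  shows "\<forall>i\<le>k. \<forall>j\<le>k. gbisimilar tr tau x y (t i) (t j)"
proof -
  obtain R where bis0: "generic_bisim tr tau x y R" and r0: "R (t 0) (t k)"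
    using assms(2) unfolding gbisimilar_def by blast
  define B where "B = (\<lambda>a b. R a b \<or> a = b)"
  have bis: "generic_bisim tr tau x y B" unfolding B_def by (rule refl_bisim[OF bis0])
  have symB: "symp B" using bis unfolding generic_bisim_def by auto
  have reflB: "B a a" for a unfolding B_def by auto
  let ?Q = "Qq tr tau B"
  have sub: "\<And>a b. B a b \<Longrightarrow> ?Q a b" unfolding Qq_def by auto
  have "generic_bisim tr tau x y ?Q"
    unfolding generic_bisim_def
  proof (intro conjI allI impI)
    show "symp ?Q" using symB unfolding Qq_def symp_def by blast
  next
    fix s u a s'
    assume h: "?Q s u \<and> tr s a s'"
    show "(a = tau \<and> ?Q s' u) \<or>
        (\<exists>t' t1 t2. gstep tr tau x ?Q s u t1 \<and> tr t1 a t2 \<and> gstep tr tau y ?Q s' t2 t' \<and> ?Q s' t')"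
    proof -
      consider "B s u" | "Pp tr tau B s u" | "Pp tr tau B u s" using h unfolding Qq_def by blast
      then show ?thesis
      proof cases
        case 1
        with h bis have "(a = tau \<and> B s' u) \<or>
          (\<exists>t' t1 t2. gstep tr tau x B s u t1 \<and> tr t1 a t2 \<and> gstep tr tau y B s' t2 t' \<and> B s' t')"
          unfolding generic_bisim_def by blast
        then show ?thesis by (rule lift_match[rotated]) (rule sub)
      next
        case 2
        then obtain r z where p: "tau_steps tr tau r s" "tau_steps tr tau s u"
          "tau_steps tr tau u z" "B r z" unfolding Pp_def by blast
        have Tsz: "tau_steps tr tau s z" using T_trans[OF p(2) p(3)] .
        have M: "(a = tau \<and> ?Q s' z) \<or>
          (\<exists>t' t1 t2. gstep tr tau x ?Q s z t1 \<and> tr t1 a t2 \<and> gstep tr tau y ?Q s' t2 t' \<and> ?Q s' t')"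
          using key[OF bis p(1)[unfolded tau_steps_def], of a s'] h p(4) Tsz by blast
        have Qsu: "?Q s u" using h by blast
        show ?thesis using M
        proof
          assume hh: "a = tau \<and> ?Q s' z"
          have "u = z \<or> (\<exists>n1. tau_steps tr tau u n1 \<and> tr n1 tau z)"
            using p(3) unfolding tau_steps_def by (induction rule: rtranclp_induct) auto
          then show ?thesis
          proof
            assume "u = z" then show ?thesis using hh by blast
          next
            assume "\<exists>n1. tau_steps tr tau u n1 \<and> tr n1 tau z"
            then obtain n1 where n1: "tau_steps tr tau u n1" "tr n1 tau z" by blast
            have "tau_steps tr tau s n1" using T_trans[OF p(2) n1(1)] .
            moreover have "tau_steps tr tau n1 z" using T_step[of tr n1 tau z] n1(2) by blast
            ultimately have "Pp tr tau B s n1" unfolding Pp_def using p(1,4) by blast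
            then have "?Q s n1" unfolding Qq_def by blast
            then have "gstep tr tau x ?Q s u n1" using n1(1) Qsu
              by (cases x) (auto simp: gstep_def)
            moreover have "gstep tr tau y ?Q s' z z" using hh
              by (cases y) (auto simp: gstep_def T_refl)
            ultimately show ?thesis using hh n1(2) by blast
          qed
        next
          assume "\<exists>t' t1 t2. gstep tr tau x ?Q s z t1 \<and> tr t1 a t2 \<and> gstep tr tau y ?Q s' t2 t' \<and> ?Q s' t'"
          then obtain w' w1 w2 where w: "gstep tr tau x ?Q s z w1" "tr w1 a w2"
            "gstep tr tau y ?Q s' w2 w'" "?Q s' w'" by blast
          have "gstep tr tau x ?Q s u w1"
          proof -
            have "tau_steps tr tau u w1" using T_trans[OF p(3) gstep_tau[OF w(1)]] .
            then show ?thesis using w(1) Qsu by (cases x) (auto simp: gstep_def)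
          qed
          then show ?thesis using w by blast
        qed
      next
        case 3
        then have Tus: "tau_steps tr tau u s" unfolding Pp_def by blast
        have Qs: "?Q s s" "?Q s' s'" using reflB by (auto simp: Qq_def)
        have "gstep tr tau x ?Q s u s" using Tus h Qs
          by (cases x) (auto simp: gstep_def)
        moreover have "gstep tr tau y ?Q s' s' s'" using Qs
          by (cases y) (auto simp: gstep_def T_refl)
        ultimately show ?thesis using h Qs by blast
      qed
    qed
  qed
  moreover have "?Q (t i) (t j)" if "i \<le> k" "j \<le> k" for i j
  proof -
    have B0: "B (t 0) (t k)" using r0 unfolding B_def by auto
    have pth: "\<And>a b. a \<le> b \<Longrightarrow> b \<le> k \<Longrightarrow> tau_steps tr tau (t a) (t b)"
      using path[where k=k and t=t and tr=tr and tau=tau, OF assms(1)] by blast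
    have PP: "Pp tr tau B (t a) (t b)" if "a \<le> b" "b \<le> k" for a b
      unfolding Pp_def
    proof (intro exI conjI)
      show "tau_steps tr tau (t 0) (t a)" using pth that by simp
      show "tau_steps tr tau (t a) (t b)" using pth that by simp
      show "tau_steps tr tau (t b) (t k)" using pth that by simp
    qed (rule B0)
    show ?thesis
    proof (cases "i \<le> j")
      case True then show ?thesis using PP that unfolding Qq_def by blast
    next
      case False then show ?thesis using PP[of j i] that unfolding Qq_def by simp
    qed
  qed
  ultimately show ?thesis unfolding gbisimilar_def by blast
qed

end
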